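(* Let $U$ be an infinite uniquely $2$-divisible group, $\nu$ an involutory almost regular automorphism of $U$, and let $A$ be an infinite abelian subgroup of $U$ which is inverted by $\nu$ and maximal (with respect to inclusion) among abelian subgroups of $U$ inverted by $\nu$. Let $B$ be a finitely generated abelian subgroup of $U$ which is inverted by $\nu$. Then $A$ contains a subgroup $A_1$ of finite index such that $\langle A_1,B\rangle$ is abelian.
   Context: An automorphism $\nu$ is involutory if $\nu\ne\mathrm{id}$ and $\nu^2=\mathrm{id}$, and almost regular if $C_U(\nu)$ is finite. A group is uniquely $2$-divisible if every element has a unique square root. A subgroup is inverted by $\nu$ if $x^\nu=x^{-1}$ for all its elements $x$. *)

theory Defs
  imports "HOL-Algebra.Algebra"
begin

definition uniquely_2_divisible :: "('a, 'b) monoid_scheme \<Rightarrow> bool" where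
  "uniquely_2_divisible G \<longleftrightarrow>
     (\<forall>x \<in> carrier G. \<exists>!y. y \<in> carrier G \<and> y \<otimes>\<^bsub>G\<^esub> y = x)"

definition involutory_aut :: "('a, 'b) monoid_scheme \<Rightarrow> ('a \<Rightarrow> 'a) \<Rightarrow> bool" where
  "involutory_aut G \<nu> \<longleftrightarrow> \<nu> \<in> iso G G
     \<and> (\<exists>x \<in> carrier G. \<nu> x \<noteq> x)
     \<and> (\<forall>x \<in> carrier G. \<nu> (\<nu> x) = x)"

definition almost_regular :: "('a, 'b) monoid_scheme \<Rightarrow> ('a \<Rightarrow> 'a) \<Rightarrow> bool" where
  "almost_regular G \<nu> \<longleftrightarrow> finite {x \<in> carrier G. \<nu> x = x}"

definition inverted_by :: "('a, 'b) monoid_scheme \<Rightarrow> ('a \<Rightarrow> 'a) \<Rightarrow> 'a set \<Rightarrow> bool" where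
  "inverted_by G \<nu> H \<longleftrightarrow> (\<forall>x \<in> H. \<nu> x = inv\<^bsub>G\<^esub> x)"

definition abelian_subgroup :: "'a set \<Rightarrow> ('a, 'b) monoid_scheme \<Rightarrow> bool" where
  "abelian_subgroup H G \<longleftrightarrow> subgroup H G
     \<and> (\<forall>x \<in> H. \<forall>y \<in> H. x \<otimes>\<^bsub>G\<^esub> y = y \<otimes>\<^bsub>G\<^esub> x)"

definition finitely_generated_subgroup :: "'a set \<Rightarrow> ('a, 'b) monoid_scheme \<Rightarrow> bool" where
  "finitely_generated_subgroup H G \<longleftrightarrow>
     (\<exists>S. finite S \<and> S \<subseteq> carrier G \<and> H = generate G S)"

definition finite_index_in :: "'a set \<Rightarrow> 'a set \<Rightarrow> ('a, 'b) monoid_scheme \<Rightarrow> bool" where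
  "finite_index_in H K G \<longleftrightarrow> finite {H #>\<^bsub>G\<^esub> a | a. a \<in> K}"

end

theory Submission
  imports Defs
begin

definition fincov :: "('a,'b) monoid_scheme \<Rightarrow> 'a set \<Rightarrow> 'a set \<Rightarrow> bool" where
  "fincov G H K \<longleftrightarrow> (\<exists>F. finite F \<and> F \<subseteq> H \<and> H \<subseteq> (\<Union>f\<in>F. (\<lambda>k. f \<otimes>\<^bsub>G\<^esub> k) ` K))"

lemma (in group) coset_diff_in:
  assumes "subgroup K G" "g \<in> carrier G" "z \<in> (\<lambda>k. g \<otimes> k) ` K" "y \<in> (\<lambda>k. g \<otimes> k) ` K"
  shows "inv z \<otimes> y \<in> K"
proof -
  from assms(3) obtain k1 where k1: "k1 \<in> K" "z = g \<otimes> k1" by auto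
  from assms(4) obtain k2 where k2: "k2 \<in> K" "y = g \<otimes> k2" by auto
  note k = k1 k2
  have c: "k1 \<in> carrier G" "k2 \<in> carrier G" using k subgroup.mem_carrier[OF assms(1)] by auto
  have "inv z \<otimes> y = inv k1 \<otimes> k2"
    using k c assms(2) by (simp add: inv_mult_group m_assoc[symmetric]) (simp add: m_assoc)
  then show ?thesis using k subgroup.m_closed[OF assms(1)] subgroup.m_inv_closed[OF assms(1)] by auto
qed

lemma (in group) weak_neumann:
  assumes "subgroup H G" "finite Fm"
    "\<And>g K. (g,K) \<in> Fm \<Longrightarrow> g \<in> H \<and> subgroup K G \<and> K \<subseteq> H"
    "H \<subseteq> (\<Union>(g,K)\<in>Fm. (\<lambda>k. g \<otimes> k) ` K)"
  shows "\<exists>g K. (g,K) \<in> Fm \<and> fincov G H K"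
  using assms
proof (induction "card (snd ` Fm)" arbitrary: Fm rule: less_induct)
  case less
  have HC: "H \<subseteq> carrier G" using subgroup.subset[OF less.prems(1)] .
  have "\<one> \<in> H" using subgroup.one_closed[OF less.prems(1)] .
  then obtain g0 L where gL: "(g0,L) \<in> Fm" using less.prems(4) by blast
  show ?case
  proof (cases "fincov G H L")
    case True then show ?thesis using gL by blast
  next
    case False
    define J where "J = fst ` {p\<in>Fm. snd p = L}"
    have finJ: "finite J" unfolding J_def using less.prems(2) by simp
    have JH: "J \<subseteq> H" unfolding J_def using less.prems(3) by force
    have Jm: "\<And>j. j \<in> J \<longleftrightarrow> (j,L) \<in> Fm" unfolding J_def by force
    have "\<not> H \<subseteq> (\<Union>f\<in>J. (\<lambda>k. f \<otimes> k) ` L)"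
      using False finJ JH unfolding fincov_def by blast
    then obtain x where x: "x \<in> H" "\<And>j. j\<in>J \<Longrightarrow> x \<notin> (\<lambda>k. j \<otimes> k) ` L"
      by blast
    have xc: "x \<in> carrier G" using x HC by blast
    have subL: "subgroup L G" "L \<subseteq> H" using less.prems(3) gL by auto
    define Fm' where "Fm' = {p\<in>Fm. snd p \<noteq> L} \<union> (\<lambda>(j,(g,K)). (j \<otimes> inv x \<otimes> g, K)) ` (J \<times> {p\<in>Fm. snd p \<noteq> L})"
    have fin': "finite Fm'" unfolding Fm'_def using less.prems(2) finJ by simp
    have snd': "snd ` Fm' \<subseteq> snd ` Fm - {L}" unfolding Fm'_def by force
    have card': "card (snd ` Fm') < card (snd ` Fm)"
    proof -
      have "card (snd ` Fm') \<le> card (snd ` Fm - {L})"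
        using snd' less.prems(2) by (simp add: card_mono)
      also have "\<dots> < card (snd ` Fm)"
        using gL less.prems(2) by (metis card_Diff1_less finite_imageI image_eqI snd_conv)
      finally show ?thesis .
    qed
    have mem': "\<And>g K. (g,K) \<in> Fm' \<Longrightarrow> g \<in> H \<and> subgroup K G \<and> K \<subseteq> H"
    proof -
      fix g K assume "(g,K) \<in> Fm'"
      then consider "(g,K) \<in> Fm" | j g0 where "j \<in> J" "(g0,K) \<in> Fm" "g = j \<otimes> inv x \<otimes> g0"
        unfolding Fm'_def by auto
      then show "g \<in> H \<and> subgroup K G \<and> K \<subseteq> H"
      proof cases
        case 1 then show ?thesis using less.prems(3) by blast
      next
        case 2
        have "j \<in> H" "g0 \<in> H" using 2 JH less.prems(3) by auto
        then have "j \<otimes> inv x \<otimes> g0 \<in> H" using x(1)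
          by (simp add: subgroup.m_closed[OF less.prems(1)] subgroup.m_inv_closed[OF less.prems(1)])
        then show ?thesis using 2 less.prems(3) by blast
      qed
    qed
    have cov': "H \<subseteq> (\<Union>(g,K)\<in>Fm'. (\<lambda>k. g \<otimes> k) ` K)"
    proof
      fix z assume z: "z \<in> H"
      then obtain g K where gK: "(g,K) \<in> Fm" "z \<in> (\<lambda>k. g \<otimes> k) ` K" using less.prems(4) by blast
      show "z \<in> (\<Union>(g,K)\<in>Fm'. (\<lambda>k. g \<otimes> k) ` K)"
      proof (cases "K = L")
        case False
        then have "(g,K) \<in> Fm'" unfolding Fm'_def using gK by auto
        then show ?thesis using gK by blast
      next
        case True
        then have gJ: "g \<in> J" using Jm gK by simp
        from gK True obtain l where l: "l \<in> L" "z = g \<otimes> l" by blast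
        have lc: "l \<in> carrier G" using l subL HC by blast
        have gc: "g \<in> carrier G" using gJ JH HC by blast
        have "x \<otimes> l \<in> H" using x(1) l subL subgroup.m_closed[OF less.prems(1)] by auto
        then obtain g' K' where g'K': "(g',K') \<in> Fm" "x \<otimes> l \<in> (\<lambda>k. g' \<otimes> k) ` K'"
          using less.prems(4) by blast
        then obtain k' where k': "k' \<in> K'" "x \<otimes> l = g' \<otimes> k'" by blast
        have g'c: "g' \<in> carrier G" using g'K' less.prems(3) HC by blast
        have k'c: "k' \<in> carrier G" using k' g'K' less.prems(3) HC by blast
        have KL: "K' \<noteq> L"
        proof
          assume KL: "K' = L"
          then have "g' \<in> J" using Jm g'K' by simp
          have "x = g' \<otimes> (k' \<otimes> inv l)"
            using k' xc lc g'c k'c by (metis inv_solve_right m_assoc m_closed inv_closed)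
          moreover have "k' \<otimes> inv l \<in> L" using k' KL l subgroup.m_closed[OF subL(1)] subgroup.m_inv_closed[OF subL(1)] by auto
          ultimately show False using x(2)[OF \<open>g' \<in> J\<close>] by blast
        qed
        have "(g \<otimes> inv x \<otimes> g', K') \<in> Fm'" unfolding Fm'_def using gJ g'K' KL by force
        moreover have "z = (g \<otimes> inv x \<otimes> g') \<otimes> k'"
        proof -
          have "(g \<otimes> inv x \<otimes> g') \<otimes> k' = g \<otimes> inv x \<otimes> (x \<otimes> l)"
            using k' gc xc g'c k'c by (simp add: m_assoc)
          also have "\<dots> = g \<otimes> l" using gc xc lc by (simp add: m_assoc[symmetric]) (simp add: m_assoc)
          finally show ?thesis using l by simp
        qed
        ultimately show ?thesis using k' by blast
      qed
    qed
    obtain g K where "(g,K) \<in> Fm'" "fincov G H K"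
      using less.hyps[OF card' less.prems(1) fin' mem' cov'] by blast
    moreover then have "K \<in> snd ` Fm" using snd' by force
    ultimately show ?thesis by force
  qed
qed


lemma (in group) coset_split:
  assumes "subgroup K G" "g \<in> carrier G" "z \<in> (\<lambda>k. g \<otimes> k) ` K" "y \<in> (\<lambda>k. g \<otimes> k) ` K"
    "z \<in> carrier G" "y \<in> carrier G"
  shows "y \<in> (\<lambda>k. z \<otimes> k) ` K"
proof -
  have "inv z \<otimes> y \<in> K" using coset_diff_in[OF assms(1-4)] .
  moreover have "y = z \<otimes> (inv z \<otimes> y)" using assms(5,6) by (simp add: m_assoc[symmetric])
  ultimately show ?thesis by blast
qed

lemma (in group) fincov_trans:
  assumes "subgroup H G" "L \<subseteq> H" "fincov G H L" "fincov G L M" "M \<subseteq> K" "M \<subseteq> carrier G"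
  shows "fincov G H K"
proof -
  obtain F2 where F2: "finite F2" "F2 \<subseteq> H" "H \<subseteq> (\<Union>f\<in>F2. (\<lambda>k. f\<otimes>k)`L)"
    using assms(3) unfolding fincov_def by blast
  obtain F1 where F1: "finite F1" "F1 \<subseteq> L" "L \<subseteq> (\<Union>f\<in>F1. (\<lambda>k. f\<otimes>k)`M)"
    using assms(4) unfolding fincov_def by blast
  have HC: "H \<subseteq> carrier G" using subgroup.subset[OF assms(1)] .
  define F where "F = (\<lambda>(a,b). a \<otimes> b) ` (F2 \<times> F1)"
  have "finite F" unfolding F_def using F1 F2 by simp
  moreover have "F \<subseteq> H" unfolding F_def
  proof (clarsimp)
    fix a b assume "a \<in> F2" "b \<in> F1"
    then have "a \<in> H" "b \<in> H" using F1(2) F2(2) assms(2) by blast+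
    then show "a \<otimes> b \<in> H" using subgroup.m_closed[OF assms(1)] by blast
  qed
  moreover have "H \<subseteq> (\<Union>f\<in>F. (\<lambda>k. f\<otimes>k)`K)"
  proof
    fix y assume y: "y \<in> H"
    then obtain a l where al: "a \<in> F2" "l \<in> L" "y = a \<otimes> l" using F2(3) by blast
    then obtain b m where bm: "b \<in> F1" "m \<in> M" "l = b \<otimes> m" using F1(3) by blast
    have c: "a \<in> carrier G" "b \<in> carrier G" "m \<in> carrier G"
      using al bm F1 F2 assms(2,6) HC by auto
    have "y = (a \<otimes> b) \<otimes> m" using al bm c by (simp add: m_assoc)
    moreover have "a \<otimes> b \<in> F" unfolding F_def using al bm by force
    ultimately show "y \<in> (\<Union>f\<in>F. (\<lambda>k. f\<otimes>k)`K)" using bm assms(5) by blast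
  qed
  ultimately show ?thesis unfolding fincov_def by blast
qed

lemma (in group) strong_neumann:
  assumes "subgroup H G" "subgroup K G" "K \<subseteq> H" "finite Fm"
    "\<And>g L. (g,L) \<in> Fm \<Longrightarrow> g \<in> H \<and> subgroup L G \<and> L \<subseteq> H \<and> \<one> \<notin> (\<lambda>k. g\<otimes>k)`L"
    "H \<subseteq> K \<union> (\<Union>(g,L)\<in>Fm. (\<lambda>k. g\<otimes>k)`L)"
  shows "fincov G H K"
  using assms
proof (induction "card Fm" arbitrary: H K Fm rule: less_induct)
  case less
  have HC: "H \<subseteq> carrier G" using subgroup.subset[OF less.prems(1)] .
  have KC: "K \<subseteq> carrier G" using subgroup.subset[OF less.prems(2)] .
  have K1: "(\<lambda>k. \<one> \<otimes> k)`K = K" using KC by force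
  define Fm0 where "Fm0 = insert (\<one>,K) Fm"
  have "\<exists>g L. (g,L) \<in> Fm0 \<and> fincov G H L"
  proof (rule weak_neumann[OF less.prems(1)])
    show "finite Fm0" unfolding Fm0_def using less.prems(4) by simp
    show "\<And>g K'. (g, K') \<in> Fm0 \<Longrightarrow> g \<in> H \<and> subgroup K' G \<and> K' \<subseteq> H"
      unfolding Fm0_def using less.prems(2,3,5) subgroup.one_closed[OF less.prems(1)] by auto
    show "H \<subseteq> (\<Union>(g, K)\<in>Fm0. (\<lambda>k. g \<otimes> k) ` K)"
      unfolding Fm0_def using less.prems(6) K1 by auto
  qed
  then obtain g L where gL: "(g,L) \<in> Fm0" "fincov G H L" by blast
  show ?case
  proof (cases "(g,L) = (\<one>,K)")
    case True then show ?thesis using gL by simp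
  next
    case False
    then have gLF: "(g,L) \<in> Fm" using gL unfolding Fm0_def by auto
    have gH: "g \<in> H" and sL: "subgroup L G" and LH: "L \<subseteq> H" and one: "\<one> \<notin> (\<lambda>k. g\<otimes>k)`L"
      using less.prems(5)[OF gLF] by auto
    have LC: "L \<subseteq> carrier G" using subgroup.subset[OF sL] .
    define P where "P = (\<lambda>p. (\<lambda>k. fst p \<otimes> k) ` snd p \<inter> L \<noteq> {})"
    define Fm1 where "Fm1 = {p\<in>Fm. P p}"
    have notin: "(g,L) \<notin> Fm1"
    proof
      assume "(g,L) \<in> Fm1"
      then obtain l where l: "l \<in> L" "g \<otimes> l \<in> L" unfolding Fm1_def P_def by auto
      have gc: "g \<in> carrier G" using gH HC by blast
      have lc: "l \<in> carrier G" using l LC by blast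
      have "g = (g \<otimes> l) \<otimes> inv l" using gc lc by (simp add: m_assoc)
      then have "g \<in> L" using l subgroup.m_closed[OF sL] subgroup.m_inv_closed[OF sL] by metis
      then have "inv g \<in> L" using subgroup.m_inv_closed[OF sL] by blast
      moreover have "g \<otimes> inv g = \<one>" using gc by simp
      ultimately show False using one by force
    qed
    have card1: "card Fm1 < card Fm"
      using notin gLF less.prems(4) unfolding Fm1_def by (intro psubset_card_mono) auto
    define zz where "zz = (\<lambda>p. SOME z. z \<in> (\<lambda>k. fst p \<otimes> k) ` snd p \<inter> L)"
    define Fm' where "Fm' = (\<lambda>p. (zz p, snd p \<inter> L)) ` Fm1"
    have fin': "finite Fm'" unfolding Fm'_def Fm1_def using less.prems(4) by simp
    have card': "card Fm' < card Fm"
      using card1 card_image_le[of Fm1 "\<lambda>p. (zz p, snd p \<inter> L)"] less.prems(4)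
      unfolding Fm'_def Fm1_def by simp
    have zz: "\<And>p. p \<in> Fm1 \<Longrightarrow> zz p \<in> (\<lambda>k. fst p \<otimes> k) ` snd p \<inter> L"
      unfolding zz_def Fm1_def P_def by (rule someI_ex) auto
    have mem': "\<And>g' L'. (g',L') \<in> Fm' \<Longrightarrow> g' \<in> L \<and> subgroup L' G \<and> L' \<subseteq> L \<and> \<one> \<notin> (\<lambda>k. g'\<otimes>k)`L'"
    proof -
      fix g' L' assume "(g',L') \<in> Fm'"
      then obtain a M where aM: "(a,M) \<in> Fm1" "g' = zz (a,M)" "L' = M \<inter> L" unfolding Fm'_def by auto
      have aMF: "(a,M) \<in> Fm" using aM unfolding Fm1_def by simp
      have aH: "a \<in> H" and sM: "subgroup M G" and MH: "M \<subseteq> H" and one': "\<one> \<notin> (\<lambda>k. a\<otimes>k)`M"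
        using less.prems(5)[OF aMF] by auto
      have z: "g' \<in> (\<lambda>k. a \<otimes> k) ` M" "g' \<in> L" using zz[OF aM(1)] aM by auto
      then obtain k0 where k0: "k0 \<in> M" "g' = a \<otimes> k0" by blast
      have ac: "a \<in> carrier G" using aH HC by blast
      have k0c: "k0 \<in> carrier G" using k0 subgroup.subset[OF sM] by blast
      have "\<one> \<notin> (\<lambda>k. g'\<otimes>k)`L'"
      proof
        assume "\<one> \<in> (\<lambda>k. g'\<otimes>k)`L'"
        then obtain k where k: "k \<in> M" "\<one> = g' \<otimes> k" using aM by auto
        have kc: "k \<in> carrier G" using k subgroup.subset[OF sM] by blast
        have "\<one> = a \<otimes> (k0 \<otimes> k)" using k k0 ac k0c kc by (simp add: m_assoc)
        moreover have "k0 \<otimes> k \<in> M" using k k0 subgroup.m_closed[OF sM] by blast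
        ultimately show False using one' by blast
      qed
      moreover have "subgroup L' G" using aM subgroups_Inter_pair[OF sM sL] by simp
      ultimately show "g' \<in> L \<and> subgroup L' G \<and> L' \<subseteq> L \<and> \<one> \<notin> (\<lambda>k. g'\<otimes>k)`L'"
        using z aM by auto
    qed
    have cov': "L \<subseteq> (K \<inter> L) \<union> (\<Union>(g',L')\<in>Fm'. (\<lambda>k. g'\<otimes>k)`L')"
    proof
      fix y assume yL: "y \<in> L"
      then have yH: "y \<in> H" using LH by blast
      have yc: "y \<in> carrier G" using yL LC by blast
      show "y \<in> (K \<inter> L) \<union> (\<Union>(g',L')\<in>Fm'. (\<lambda>k. g'\<otimes>k)`L')"
      proof (cases "y \<in> K")
        case True then show ?thesis using yL by blast
      next
        case False
        then obtain a M where aM: "(a,M) \<in> Fm" "y \<in> (\<lambda>k. a\<otimes>k)`M" using less.prems(6) yH by blast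
        have aH: "a \<in> H" and sM: "subgroup M G"
          using less.prems(5)[OF aM(1)] by auto
        have ac: "a \<in> carrier G" using aH HC by blast
        have F1: "(a,M) \<in> Fm1" unfolding Fm1_def P_def using aM yL by auto
        define z where "z = zz (a,M)"
        have z: "z \<in> (\<lambda>k. a \<otimes> k) ` M" "z \<in> L" using zz[OF F1] unfolding z_def by auto
        have zc: "z \<in> carrier G" using z LC by blast
        have "inv z \<otimes> y \<in> M" using coset_diff_in[OF sM ac z(1) aM(2)] .
        moreover have "inv z \<otimes> y \<in> L"
          using z yL subgroup.m_closed[OF sL] subgroup.m_inv_closed[OF sL] by blast
        moreover have "y = z \<otimes> (inv z \<otimes> y)" using zc yc by (simp add: m_assoc[symmetric])
        moreover have "(z, M \<inter> L) \<in> Fm'" unfolding Fm'_def z_def using F1 by force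
        ultimately show ?thesis by blast
      qed
    qed
    have "fincov G L (K \<inter> L)"
      using less.hyps[OF card' sL subgroups_Inter_pair[OF less.prems(2) sL] _ fin' mem' cov'] by blast
    then show ?thesis using fincov_trans[OF less.prems(1) LH gL(2)] KC by blast
  qed
qed

lemma (in group) fincov_Int:
  assumes "subgroup H G" "subgroup K1 G" "subgroup K2 G" "K1 \<subseteq> H" "K2 \<subseteq> H"
    "fincov G H K1" "fincov G H K2"
  shows "fincov G H (K1 \<inter> K2)"
proof -
  have HC: "H \<subseteq> carrier G" using subgroup.subset[OF assms(1)] .
  obtain F2 where F2: "finite F2" "F2 \<subseteq> H" "H \<subseteq> (\<Union>f\<in>F2. (\<lambda>k. f\<otimes>k)`K2)"
    using assms(7) unfolding fincov_def by blast
  define zz where "zz = (\<lambda>f. SOME z. z \<in> (\<lambda>k. f \<otimes> k) ` K2 \<inter> K1)"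
  define F where "F = zz ` {f\<in>F2. (\<lambda>k. f \<otimes> k) ` K2 \<inter> K1 \<noteq> {}}"
  have zz: "\<And>f. (\<lambda>k. f \<otimes> k) ` K2 \<inter> K1 \<noteq> {} \<Longrightarrow> zz f \<in> (\<lambda>k. f \<otimes> k) ` K2 \<inter> K1"
    unfolding zz_def by (rule someI_ex) auto
  have "fincov G K1 (K1 \<inter> K2)"
    unfolding fincov_def
  proof (intro exI conjI)
    show "finite F" unfolding F_def using F2 by simp
    show "F \<subseteq> K1" unfolding F_def using zz by auto
    show "K1 \<subseteq> (\<Union>f\<in>F. (\<lambda>k. f\<otimes>k)`(K1 \<inter> K2))"
    proof
      fix y assume y: "y \<in> K1"
      then obtain f where f: "f \<in> F2" "y \<in> (\<lambda>k. f\<otimes>k)`K2" using F2(3) assms(4) by blast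
      have fc: "f \<in> carrier G" using f F2 HC by blast
      have yc: "y \<in> carrier G" using y assms(4) HC by blast
      have ne: "(\<lambda>k. f \<otimes> k) ` K2 \<inter> K1 \<noteq> {}" using f y by blast
      define z where "z = zz f"
      have z: "z \<in> (\<lambda>k. f \<otimes> k) ` K2" "z \<in> K1" using zz[OF ne] unfolding z_def by auto
      have zc: "z \<in> carrier G" using z assms(4) HC by blast
      have "inv z \<otimes> y \<in> K2" using coset_diff_in[OF assms(3) fc z(1) f(2)] .
      moreover have "inv z \<otimes> y \<in> K1"
        using z y subgroup.m_closed[OF assms(2)] subgroup.m_inv_closed[OF assms(2)] by blast
      moreover have "y = z \<otimes> (inv z \<otimes> y)" using zc yc by (simp add: m_assoc[symmetric])
      moreover have "z \<in> F" unfolding F_def z_def using f ne by blast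
      ultimately show "y \<in> (\<Union>f\<in>F. (\<lambda>k. f\<otimes>k)`(K1 \<inter> K2))" by blast
    qed
  qed
  then show ?thesis using fincov_trans[OF assms(1) assms(4) assms(6)] subgroup.subset[OF assms(2)] by blast
qed


lemma (in group) inv_cancel_l [simp]: "x \<in> carrier G \<Longrightarrow> y \<in> carrier G \<Longrightarrow> x \<otimes> (inv x \<otimes> y) = y"
  by (simp add: m_assoc[symmetric])
lemma (in group) inv_cancel_l' [simp]: "x \<in> carrier G \<Longrightarrow> y \<in> carrier G \<Longrightarrow> inv x \<otimes> (x \<otimes> y) = y"
  by (simp add: m_assoc[symmetric])

lemma (in group) lcancel: "x \<in> carrier G \<Longrightarrow> y \<in> carrier G \<Longrightarrow> z \<in> carrier G \<Longrightarrow> x \<otimes> y = x \<otimes> z \<Longrightarrow> y = z"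
  by simp
lemma (in group) rcancel: "x \<in> carrier G \<Longrightarrow> y \<in> carrier G \<Longrightarrow> z \<in> carrier G \<Longrightarrow> y \<otimes> x = z \<otimes> x \<Longrightarrow> y = z"
  by simp

lemma (in group) centr_sub:
  assumes "subgroup A G" "w \<in> carrier G"
  shows "subgroup {a\<in>A. w \<otimes> a = a \<otimes> w} G"
proof (rule subgroupI)
  have AC: "A \<subseteq> carrier G" using subgroup.subset[OF assms(1)] .
  show "{a \<in> A. w \<otimes> a = a \<otimes> w} \<subseteq> carrier G" using AC by blast
  show "{a \<in> A. w \<otimes> a = a \<otimes> w} \<noteq> {}" using subgroup.one_closed[OF assms(1)] assms by auto
  fix a assume a: "a \<in> {a \<in> A. w \<otimes> a = a \<otimes> w}"
  then have ac: "a \<in> carrier G" using AC by blast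
  have "inv a \<otimes> (w \<otimes> a) \<otimes> inv a = inv a \<otimes> (a \<otimes> w) \<otimes> inv a" using a by simp
  then have "w \<otimes> inv a = inv a \<otimes> w" using ac assms(2) by (simp add: m_assoc)
  then show "inv a \<in> {a \<in> A. w \<otimes> a = a \<otimes> w}" using a subgroup.m_inv_closed[OF assms(1)] by blast
next
  have AC: "A \<subseteq> carrier G" using subgroup.subset[OF assms(1)] .
  fix a b assume a: "a \<in> {a \<in> A. w \<otimes> a = a \<otimes> w}" and b: "b \<in> {a \<in> A. w \<otimes> a = a \<otimes> w}"
  then have c: "a \<in> carrier G" "b \<in> carrier G" using AC by auto
  have "w \<otimes> (a \<otimes> b) = a \<otimes> (w \<otimes> b)" using a c assms(2) by (simp add: m_assoc[symmetric])
  also have "\<dots> = a \<otimes> b \<otimes> w" using b c assms(2) by (simp add: m_assoc)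
  finally show "a \<otimes> b \<in> {a \<in> A. w \<otimes> a = a \<otimes> w}" using a b subgroup.m_closed[OF assms(1)] by blast
qed


locale nugrp = group +
  fixes nu :: "'a \<Rightarrow> 'a"
  assumes nu_hom: "nu \<in> hom G G"
    and nu_nu: "\<And>x. x \<in> carrier G \<Longrightarrow> nu (nu x) = x"
    and u2: "uniquely_2_divisible G"
begin

lemma gh: "group_hom G G nu"
  by (simp add: group_hom_def group_hom_axioms_def nu_hom is_group)

lemma nu_closed [simp]: "x \<in> carrier G \<Longrightarrow> nu x \<in> carrier G"
  using group_hom.hom_closed[OF gh] by blast
lemma nu_mult [simp]: "x \<in> carrier G \<Longrightarrow> y \<in> carrier G \<Longrightarrow> nu (x \<otimes> y) = nu x \<otimes> nu y"
  using group_hom.hom_mult[OF gh] by blast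
lemma nu_inv [simp]: "x \<in> carrier G \<Longrightarrow> nu (inv x) = inv (nu x)"
  using group_hom.hom_inv[OF gh] by blast
lemma nu_one [simp]: "nu \<one> = \<one>"
  using group_hom.hom_one[OF gh] by blast

lemma sqrt_unique: "x \<in> carrier G \<Longrightarrow> y \<in> carrier G \<Longrightarrow> x \<otimes> x = y \<otimes> y \<Longrightarrow> x = y"
proof -
  assume a: "x \<in> carrier G" "y \<in> carrier G" "x \<otimes> x = y \<otimes> y"
  have "y \<otimes> y \<in> carrier G" using a by simp
  then have "\<exists>!z. z \<in> carrier G \<and> z \<otimes> z = y \<otimes> y" using u2 unfolding uniquely_2_divisible_def by blast
  then show "x = y" using a by blast
qed

lemma sqrt_ex: "p \<in> carrier G \<Longrightarrow> \<exists>x\<in>carrier G. x \<otimes> x = p"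
  using u2 unfolding uniquely_2_divisible_def by blast

lemma decomp:
  assumes u: "u \<in> carrier G"
  shows "\<exists>x c. x \<in> carrier G \<and> nu x = inv x \<and> c \<in> carrier G \<and> nu c = c \<and> u = x \<otimes> c"
proof -
  define p where "p = u \<otimes> inv (nu u)"
  have pc: "p \<in> carrier G" unfolding p_def using u by simp
  obtain x where x: "x \<in> carrier G" "x \<otimes> x = p" using sqrt_ex[OF pc] by blast
  have "inv (nu x) \<otimes> inv (nu x) = inv (nu x \<otimes> nu x)"
    using x by (simp add: inv_mult_group)
  also have "\<dots> = inv (nu (x \<otimes> x))" using x(1) by simp
  also have "\<dots> = p" using u unfolding x(2) p_def by (simp add: nu_nu inv_mult_group)
  finally have "inv (nu x) = x" using sqrt_unique x pc by (metis inv_closed nu_closed)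
  then have nx: "nu x = inv x" using x by (metis inv_inv nu_closed)
  define c where "c = inv x \<otimes> u"
  have cc: "c \<in> carrier G" unfolding c_def using x u by simp
  have "nu c = x \<otimes> nu u" unfolding c_def using x u nx by simp
  also have "\<dots> = inv x \<otimes> (x \<otimes> x) \<otimes> nu u" using x(1) u by (simp add: m_assoc)
  also have "\<dots> = inv x \<otimes> u" using x u unfolding p_def by (simp add: m_assoc)
  finally have "nu c = c" unfolding c_def .
  moreover have "u = x \<otimes> c" unfolding c_def using x u by simp
  ultimately show ?thesis using x nx cc by blast
qed

lemma decomp_unique:
  assumes "x \<in> carrier G" "x' \<in> carrier G" "c \<in> carrier G" "c' \<in> carrier G"
    "nu x = inv x" "nu x' = inv x'" "nu c = c" "nu c' = c'" "x \<otimes> c = x' \<otimes> c'"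
  shows "c = c'"
proof -
  have "nu (x \<otimes> c) = nu (x' \<otimes> c')" by (simp only: assms(9))
  then have e2: "inv x \<otimes> c = inv x' \<otimes> c'"
    using assms(1-8) by simp
  have "x \<otimes> x = (x \<otimes> c) \<otimes> inv (inv x \<otimes> c)" using assms(1,3) by (simp add: inv_mult_group m_assoc)
  also have "\<dots> = (x' \<otimes> c') \<otimes> inv (inv x' \<otimes> c')" by (simp only: assms(9) e2)
  also have "\<dots> = x' \<otimes> x'" using assms(2,4) by (simp add: inv_mult_group m_assoc)
  finally have "x \<otimes> x = x' \<otimes> x'" .
  then have "x = x'" using sqrt_unique assms by blast
  then show ?thesis using assms(9) assms by simp
qed

lemma twist_mult:
  assumes "w \<in> carrier G" "w' \<in> carrier G" "a \<in> carrier G" "e \<in> carrier G"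
    "w \<otimes> a = a \<otimes> w'" "w' \<otimes> e = e \<otimes> w'"
  shows "w \<otimes> (a \<otimes> e) = (a \<otimes> e) \<otimes> w'"
proof -
  have "w \<otimes> (a \<otimes> e) = (w \<otimes> a) \<otimes> e" using assms(1-4) by (simp add: m_assoc)
  also have "\<dots> = (a \<otimes> w') \<otimes> e" by (simp only: assms(5))
  also have "\<dots> = a \<otimes> (w' \<otimes> e)" using assms(1-4) by (simp add: m_assoc)
  also have "\<dots> = a \<otimes> (e \<otimes> w')" by (simp only: assms(6))
  also have "\<dots> = (a \<otimes> e) \<otimes> w'" using assms(1-4) by (simp add: m_assoc)
  finally show ?thesis .
qed

lemma twist_diff:
  assumes "w \<in> carrier G" "w' \<in> carrier G" "a0 \<in> carrier G" "a \<in> carrier G"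
    "w \<otimes> a0 = a0 \<otimes> w'" "w \<otimes> a = a \<otimes> w'"
  shows "w' \<otimes> (inv a0 \<otimes> a) = (inv a0 \<otimes> a) \<otimes> w'"
proof -
  have "inv a0 \<otimes> w = inv a0 \<otimes> (w \<otimes> a0) \<otimes> inv a0" using assms(1-4) by (simp add: m_assoc)
  also have "\<dots> = inv a0 \<otimes> (a0 \<otimes> w') \<otimes> inv a0" by (simp only: assms(5))
  also have "\<dots> = w' \<otimes> inv a0" using assms(1-4) by (simp add: m_assoc)
  finally have e: "inv a0 \<otimes> w = w' \<otimes> inv a0" .
  have "w' \<otimes> (inv a0 \<otimes> a) = (w' \<otimes> inv a0) \<otimes> a" using assms(1-4) by (simp add: m_assoc)
  also have "\<dots> = (inv a0 \<otimes> w) \<otimes> a" by (simp only: e)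
  also have "\<dots> = inv a0 \<otimes> (w \<otimes> a)" using assms(1-4) by (simp add: m_assoc)
  also have "\<dots> = inv a0 \<otimes> (a \<otimes> w')" by (simp only: assms(6))
  also have "\<dots> = (inv a0 \<otimes> a) \<otimes> w'" using assms(1-4) by (simp add: m_assoc)
  finally show ?thesis .
qed

lemma key:
  assumes sA: "subgroup A G" and iA: "\<forall>a\<in>A. nu a = inv a" and b: "b \<in> carrier G" "nu b = inv b"
    and fin: "finite {x\<in>carrier G. nu x = x}"
  shows "fincov G A {a\<in>A. a \<otimes> b = b \<otimes> a}"
proof -
  define Cf where "Cf = {x\<in>carrier G. nu x = x}"
  define S where "S = (\<lambda>c. {a\<in>A. (inv b \<otimes> inv c) \<otimes> a = a \<otimes> (c \<otimes> inv b)})"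
  define Kc where "Kc = (\<lambda>c. {e\<in>A. (c \<otimes> inv b) \<otimes> e = e \<otimes> (c \<otimes> inv b)})"
  define K where "K = {a\<in>A. a \<otimes> b = b \<otimes> a}"
  have AC: "A \<subseteq> carrier G" using subgroup.subset[OF sA] .
  have sKc: "\<And>c. c \<in> carrier G \<Longrightarrow> subgroup (Kc c) G"
    unfolding Kc_def using centr_sub[OF sA] b by simp
  have "K = {a\<in>A. b \<otimes> a = a \<otimes> b}" unfolding K_def by auto
  then have sK: "subgroup K G" using centr_sub[OF sA b(1)] by simp
  have KA: "K \<subseteq> A" unfolding K_def by blast
  have S_K: "\<And>a c e. c \<in> carrier G \<Longrightarrow> a \<in> S c \<Longrightarrow> e \<in> Kc c \<Longrightarrow> a \<otimes> e \<in> S c"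
  proof -
    fix a c e assume c: "c \<in> carrier G" and a: "a \<in> S c" and e: "e \<in> Kc c"
    have ac: "a \<in> carrier G" "e \<in> carrier G" "a \<otimes> e \<in> A"
      using a e AC subgroup.m_closed[OF sA] unfolding S_def Kc_def by auto
    have "(inv b \<otimes> inv c) \<otimes> (a \<otimes> e) = (a \<otimes> e) \<otimes> (c \<otimes> inv b)"
      by (rule twist_mult) (use a e ac c b in \<open>auto simp: S_def Kc_def\<close>)
    then show "a \<otimes> e \<in> S c" unfolding S_def using ac by blast
  qed
  have one_S: "\<And>c. c \<in> Cf \<Longrightarrow> \<one> \<in> S c \<Longrightarrow> c = \<one>"
  proof -
    fix c assume c: "c \<in> Cf" and o: "\<one> \<in> S c"
    have cc: "c \<in> carrier G" "nu c = c" using c unfolding Cf_def by auto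
    have eq: "inv b \<otimes> inv c = c \<otimes> inv b" using o cc b unfolding S_def by simp
    define y where "y = b \<otimes> inv c"
    have yc: "y \<in> carrier G" unfolding y_def using b cc by simp
    have "nu y = inv b \<otimes> inv c" unfolding y_def using b cc by simp
    also have "\<dots> = inv y" unfolding y_def using b cc eq by (simp add: inv_mult_group)
    finally have ny: "nu y = inv y" .
    have "y \<otimes> c = b \<otimes> \<one>" unfolding y_def using b cc by (simp add: m_assoc)
    then show "c = \<one>" using decomp_unique[OF yc b(1) cc(1) one_closed ny b(2) cc(2) nu_one] by simp
  qed
  have cover_S: "\<And>a. a \<in> A \<Longrightarrow> \<exists>c\<in>Cf. a \<in> S c"
  proof -
    fix a assume aA: "a \<in> A"
    have ac: "a \<in> carrier G" using aA AC by blast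
    have na: "nu a = inv a" using aA iA by blast
    obtain x c where xc: "x \<in> carrier G" "nu x = inv x" "c \<in> carrier G" "nu c = c" "a \<otimes> b = x \<otimes> c"
      using decomp[of "a \<otimes> b"] ac b by auto
    have xe: "x = a \<otimes> b \<otimes> inv c" using xc ac b by (simp add: m_assoc)
    have "nu x = inv a \<otimes> (inv b \<otimes> inv c)" unfolding xe using ac b xc(3,4) na by (simp add: m_assoc)
    moreover have "inv x = c \<otimes> (inv b \<otimes> inv a)" unfolding xe using ac b xc(3) by (simp add: inv_mult_group m_assoc)
    ultimately have E: "inv a \<otimes> (inv b \<otimes> inv c) = c \<otimes> (inv b \<otimes> inv a)" using xc by simp
    have "inv b \<otimes> inv c \<otimes> a = a \<otimes> (inv a \<otimes> (inv b \<otimes> inv c)) \<otimes> a"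
      using ac b xc by (simp add: m_assoc)
    also have "\<dots> = a \<otimes> (c \<otimes> (inv b \<otimes> inv a)) \<otimes> a" by (simp only: E)
    also have "\<dots> = a \<otimes> (c \<otimes> inv b)" using ac b xc by (simp add: m_assoc)
    finally have "inv b \<otimes> inv c \<otimes> a = a \<otimes> (c \<otimes> inv b)" .
    then have "a \<in> S c" unfolding S_def using aA by blast
    then show "\<exists>c\<in>Cf. a \<in> S c" using xc unfolding Cf_def by blast
  qed
  have S1: "S \<one> \<subseteq> K"
  proof
    fix a assume a: "a \<in> S \<one>"
    then have aA: "a \<in> A" and e: "inv b \<otimes> a = a \<otimes> inv b" unfolding S_def using b by auto
    have ac: "a \<in> carrier G" using aA AC by blast
    have "a \<otimes> b = b \<otimes> (inv b \<otimes> a) \<otimes> b" using ac b by (simp add: m_assoc)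
    also have "\<dots> = b \<otimes> (a \<otimes> inv b) \<otimes> b" by (simp only: e)
    also have "\<dots> = b \<otimes> a" using ac b by (simp add: m_assoc)
    finally show "a \<in> K" unfolding K_def using aA by blast
  qed
  define Cs where "Cs = {c \<in> Cf - {\<one>}. S c \<noteq> {}}"
  define rep where "rep = (\<lambda>c. SOME a. a \<in> S c)"
  have rep: "\<And>c. c \<in> Cs \<Longrightarrow> rep c \<in> S c" unfolding rep_def Cs_def by (rule someI_ex) blast
  define Fm where "Fm = (\<lambda>c. (rep c, Kc c)) ` Cs"
  show ?thesis unfolding K_def[symmetric]
  proof (rule strong_neumann[OF sA sK KA])
    have "Cs \<subseteq> Cf" unfolding Cs_def by blast
    then have "finite Cs" using fin finite_subset unfolding Cf_def by blast
    then show "finite Fm" unfolding Fm_def by simp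
    show "\<And>g L. (g, L) \<in> Fm \<Longrightarrow> g \<in> A \<and> subgroup L G \<and> L \<subseteq> A \<and> \<one> \<notin> (\<otimes>) g ` L"
    proof -
      fix g L assume "(g, L) \<in> Fm"
      then obtain c where c: "c \<in> Cs" "g = rep c" "L = Kc c" unfolding Fm_def by blast
      have cc: "c \<in> carrier G" "c \<noteq> \<one>" "c \<in> Cf" using c unfolding Cs_def Cf_def by auto
      have gS: "g \<in> S c" using rep c by simp
      have "\<one> \<notin> (\<otimes>) g ` L"
      proof
        assume "\<one> \<in> (\<otimes>) g ` L"
        then obtain e where "e \<in> Kc c" "\<one> = g \<otimes> e" using c by blast
        then have "\<one> \<in> S c" using S_K[OF cc(1) gS] by simp
        then show False using one_S cc by blast
      qed
      then show "g \<in> A \<and> subgroup L G \<and> L \<subseteq> A \<and> \<one> \<notin> (\<otimes>) g ` L"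
        using gS c sKc[OF cc(1)] unfolding S_def Kc_def by auto
    qed
    show "A \<subseteq> K \<union> (\<Union>(g, L)\<in>Fm. (\<otimes>) g ` L)"
    proof
      fix a assume aA: "a \<in> A"
      obtain c where c: "c \<in> Cf" "a \<in> S c" using cover_S[OF aA] by blast
      show "a \<in> K \<union> (\<Union>(g, L)\<in>Fm. (\<otimes>) g ` L)"
      proof (cases "c = \<one>")
        case True then show ?thesis using c S1 by blast
      next
        case False
        then have cs: "c \<in> Cs" unfolding Cs_def using c by blast
        have cc: "c \<in> carrier G" using c unfolding Cf_def by blast
        define a0 where "a0 = rep c"
        have a0: "a0 \<in> S c" unfolding a0_def using rep[OF cs] .
        have a0c: "a0 \<in> carrier G" "a0 \<in> A" using a0 AC unfolding S_def by auto
        have ac: "a \<in> carrier G" using aA AC by blast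
        have "(c \<otimes> inv b) \<otimes> (inv a0 \<otimes> a) = (inv a0 \<otimes> a) \<otimes> (c \<otimes> inv b)"
          by (rule twist_diff[of "inv b \<otimes> inv c"]) (use a0 c a0c ac cc b in \<open>auto simp: S_def\<close>)
        moreover have "inv a0 \<otimes> a \<in> A" using a0c aA subgroup.m_closed[OF sA] subgroup.m_inv_closed[OF sA] by blast
        ultimately have "inv a0 \<otimes> a \<in> Kc c" unfolding Kc_def by blast
        moreover have "a = a0 \<otimes> (inv a0 \<otimes> a)" using a0c ac by simp
        moreover have "(a0, Kc c) \<in> Fm" unfolding Fm_def a0_def using cs by blast
        ultimately show ?thesis by blast
      qed
    qed
  qed
qed

end



lemma (in group) gen_comm:
  assumes "Xs \<subseteq> carrier G" "\<And>x y. x \<in> Xs \<Longrightarrow> y \<in> Xs \<Longrightarrow> x \<otimes> y = y \<otimes> x"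
    "x \<in> generate G Xs" "y \<in> generate G Xs"
  shows "x \<otimes> y = y \<otimes> x"
proof -
  have sub: "\<And>w. w \<in> carrier G \<Longrightarrow> subgroup {a\<in>carrier G. w \<otimes> a = a \<otimes> w} G"
    using centr_sub[OF subgroup_self] by blast
  have "\<And>w. w \<in> Xs \<Longrightarrow> generate G Xs \<subseteq> {a\<in>carrier G. w \<otimes> a = a \<otimes> w}"
  proof -
    fix w assume w: "w \<in> Xs"
    have wc: "w \<in> carrier G" using w assms(1) by blast
    have "Xs \<subseteq> {a\<in>carrier G. w \<otimes> a = a \<otimes> w}" using assms(1,2) w by auto
    then show "generate G Xs \<subseteq> {a\<in>carrier G. w \<otimes> a = a \<otimes> w}"
      using generate_subgroup_incl[OF _ sub[OF wc]] by blast
  qed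
  then have step: "\<And>w z. w \<in> Xs \<Longrightarrow> z \<in> generate G Xs \<Longrightarrow> w \<otimes> z = z \<otimes> w" by blast
  have GC: "generate G Xs \<subseteq> carrier G" using generate_incl[OF assms(1)] .
  have "Xs \<subseteq> {a\<in>carrier G. x \<otimes> a = a \<otimes> x}" using step[OF _ assms(3)] assms(1) by (auto simp: eq_commute)
  moreover have xc: "x \<in> carrier G" using assms(3) GC by blast
  ultimately have "generate G Xs \<subseteq> {a\<in>carrier G. x \<otimes> a = a \<otimes> x}"
    using generate_subgroup_incl[OF _ sub[OF xc]] by blast
  then show ?thesis using assms(4) by blast
qed


theorem lemma3p2:
  fixes U (structure) and \<nu> :: "'a \<Rightarrow> 'a" and A B :: "'a set"
  assumes "group U"
    and "infinite (carrier U)"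
    and "uniquely_2_divisible U"
    and "involutory_aut U \<nu>"
    and "almost_regular U \<nu>"
    and "abelian_subgroup A U" and "infinite A" and "inverted_by U \<nu> A"
    and "\<And>C. abelian_subgroup C U \<Longrightarrow> inverted_by U \<nu> C \<Longrightarrow> A \<subseteq> C \<Longrightarrow> C = A"
    and "abelian_subgroup B U" and "finitely_generated_subgroup B U" and "inverted_by U \<nu> B"
  shows "\<exists>A1. subgroup A1 U \<and> A1 \<subseteq> A \<and> finite_index_in A1 A U
           \<and> abelian_subgroup (generate U (A1 \<union> B)) U"
proof -
  interpret group U by fact
  interpret N: nugrp U \<nu>
  proof unfold_locales
    show "\<nu> \<in> hom U U" using assms(4) unfolding involutory_aut_def iso_def by blast
    show "\<And>x. x \<in> carrier U \<Longrightarrow> \<nu> (\<nu> x) = x" using assms(4) unfolding involutory_aut_def by blast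
    show "uniquely_2_divisible U" by fact
  qed
  have sA: "subgroup A U" and abA: "\<And>x y. x \<in> A \<Longrightarrow> y \<in> A \<Longrightarrow> x \<otimes> y = y \<otimes> x"
    using assms(6) unfolding abelian_subgroup_def by auto
  have AC: "A \<subseteq> carrier U" using subgroup.subset[OF sA] .
  have iA: "\<forall>a\<in>A. \<nu> a = inv a" using assms(8) unfolding inverted_by_def .
  have sB: "subgroup B U" and abB: "\<And>x y. x \<in> B \<Longrightarrow> y \<in> B \<Longrightarrow> x \<otimes> y = y \<otimes> x"
    using assms(10) unfolding abelian_subgroup_def by auto
  have BC: "B \<subseteq> carrier U" using subgroup.subset[OF sB] .
  have iB: "\<And>b. b \<in> B \<Longrightarrow> \<nu> b = inv b" using assms(12) unfolding inverted_by_def by blast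
  have fin: "finite {x\<in>carrier U. \<nu> x = x}" using assms(5) unfolding almost_regular_def .
  obtain S where S: "finite S" "S \<subseteq> carrier U" "B = generate U S"
    using assms(11) unfolding finitely_generated_subgroup_def by blast
  have SB: "S \<subseteq> B"
  proof
    fix s assume "s \<in> S" then show "s \<in> B" unfolding S(3) by (rule generate.incl)
  qed
  define Cn where "Cn = (\<lambda>T. {a\<in>A. \<forall>s\<in>T. a \<otimes> s = s \<otimes> a})"
  have main: "\<And>T. finite T \<Longrightarrow> T \<subseteq> S \<Longrightarrow> subgroup (Cn T) U \<and> Cn T \<subseteq> A \<and> fincov U A (Cn T)"
  proof -
    fix T assume "finite T" "T \<subseteq> S"
    then show "subgroup (Cn T) U \<and> Cn T \<subseteq> A \<and> fincov U A (Cn T)"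
    proof (induction T rule: finite_induct)
      case empty
      have "Cn {} = A" unfolding Cn_def by simp
      moreover have "fincov U A A" unfolding fincov_def
      proof (intro exI conjI)
        show "finite {\<one>}" by simp
        show "{\<one>} \<subseteq> A" using subgroup.one_closed[OF sA] by simp
        show "A \<subseteq> (\<Union>f\<in>{\<one>}. (\<otimes>) f ` A)" using AC by force
      qed
      ultimately show ?case using sA by simp
    next
      case (insert s T)
      have IH: "subgroup (Cn T) U" "Cn T \<subseteq> A" "fincov U A (Cn T)" using insert by auto
      have sS: "s \<in> carrier U" "\<nu> s = inv s" using insert.prems S(2) SB iB by auto
      define Ks where "Ks = {a\<in>A. a \<otimes> s = s \<otimes> a}"
      have eqs: "Cn (insert s T) = Cn T \<inter> Ks" unfolding Cn_def Ks_def by auto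
      have "Ks = {a\<in>A. s \<otimes> a = a \<otimes> s}" unfolding Ks_def by auto
      then have sKs: "subgroup Ks U" using centr_sub[OF sA sS(1)] by simp
      have KsA: "Ks \<subseteq> A" unfolding Ks_def by blast
      have fKs: "fincov U A Ks" unfolding Ks_def using N.key[OF sA iA sS fin] .
      have "subgroup (Cn T \<inter> Ks) U" using subgroups_Inter_pair[OF IH(1) sKs] .
      moreover have "fincov U A (Cn T \<inter> Ks)" using fincov_Int[OF sA IH(1) sKs IH(2) KsA IH(3) fKs] .
      ultimately show ?case unfolding eqs using IH(2) by blast
    qed
  qed
  define A1 where "A1 = Cn S"
  have A1: "subgroup A1 U" "A1 \<subseteq> A" "fincov U A A1" unfolding A1_def using main[OF S(1)] by auto
  have A1C: "A1 \<subseteq> carrier U" using A1(2) AC by blast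
  have fi: "finite_index_in A1 A U"
  proof -
    obtain F where F: "finite F" "F \<subseteq> A" "A \<subseteq> (\<Union>f\<in>F. (\<otimes>) f ` A1)"
      using A1(3) unfolding fincov_def by blast
    have "{A1 #> a | a. a \<in> A} \<subseteq> (\<lambda>f. A1 #> f) ` F"
    proof
      fix Y assume "Y \<in> {A1 #> a | a. a \<in> A}"
      then obtain a where a: "a \<in> A" "Y = A1 #> a" by blast
      then obtain f k where fk: "f \<in> F" "k \<in> A1" "a = f \<otimes> k" using F(3) by blast
      have c: "f \<in> carrier U" "k \<in> carrier U" "f \<in> A" "k \<in> A" using fk F(2) A1(2) AC by auto
      have "a = k \<otimes> f" using fk(3) abA c by simp
      then have "Y = (A1 #> k) #> f" using a c coset_mult_assoc[OF A1C c(2) c(1)] by simp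
      also have "\<dots> = A1 #> f" using coset_join2[OF c(2) A1(1) fk(2)] by simp
      finally show "Y \<in> (\<lambda>f. A1 #> f) ` F" using fk(1) by blast
    qed
    then show ?thesis unfolding finite_index_in_def using F(1) finite_subset by blast
  qed
  have comm: "\<And>x y. x \<in> A1 \<union> B \<Longrightarrow> y \<in> A1 \<union> B \<Longrightarrow> x \<otimes> y = y \<otimes> x"
  proof -
    have AB: "\<And>a b. a \<in> A1 \<Longrightarrow> b \<in> B \<Longrightarrow> a \<otimes> b = b \<otimes> a"
    proof -
      fix a b assume a: "a \<in> A1" and b: "b \<in> B"
      have ac: "a \<in> carrier U" using a A1C by blast
      have "S \<subseteq> {z\<in>carrier U. a \<otimes> z = z \<otimes> a}" using a S(2) unfolding A1_def Cn_def by auto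
      then have "generate U S \<subseteq> {z\<in>carrier U. a \<otimes> z = z \<otimes> a}"
        using generate_subgroup_incl[OF _ centr_sub[OF subgroup_self ac]] by blast
      then show "a \<otimes> b = b \<otimes> a" using b S(3) by blast
    qed
    fix x y assume xy: "x \<in> A1 \<union> B" "y \<in> A1 \<union> B"
    show "x \<otimes> y = y \<otimes> x"
    proof (cases "x \<in> A1")
      case True
      show ?thesis
      proof (cases "y \<in> A1")
        case True then show ?thesis using \<open>x \<in> A1\<close> abA A1(2) by blast
      next
        case False then have "y \<in> B" using xy by blast
        then show ?thesis using AB[OF \<open>x \<in> A1\<close>] by blast
      qed
    next
      case False then have xB: "x \<in> B" using xy by blast
      show ?thesis
      proof (cases "y \<in> A1")
        case True then show ?thesis using AB[OF True xB] by simp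
      next
        case False then have "y \<in> B" using xy by blast
        then show ?thesis using abB xB by blast
      qed
    qed
  qed
  have "abelian_subgroup (generate U (A1 \<union> B)) U"
    unfolding abelian_subgroup_def
  proof (intro conjI ballI)
    show "subgroup (generate U (A1 \<union> B)) U" using generate_is_subgroup A1C BC by simp
    fix x y assume "x \<in> generate U (A1 \<union> B)" "y \<in> generate U (A1 \<union> B)"
    then show "x \<otimes> y = y \<otimes> x" using gen_comm[of "A1 \<union> B"] A1C BC comm by blast
  qed
  then show ?thesis using A1(1,2) fi by blast
qed

end
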